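(* Let $f \in \mathbb{N}_0[x^{\pm 1}]$ satisfy $|\operatorname{supp}(f)| \geq 3$. Then $f = g + h$ for some $g, h \in \mathbb{N}_0[x^{\pm 1}]$ such that $g$ is hyper-monolithic and $h(1) \leq g(1)$.
   Context: $\mathbb{N}_0[x^{\pm 1}]$ denotes the semiring of Laurent polynomials in $x$ with nonnegative integer coefficients; $\operatorname{supp}(f)$ is the set of exponents occurring in $f$ with nonzero coefficient. Writing $f = \sum_{i=0}^{n} c_i x^{k_i}$ with $c_i$ positive integers and $k_0 > \cdots > k_n$, $f$ is hyper-monolithic if $|\operatorname{supp}(f)| > 1$ and either $k_0 - k_1 < k_i - k_{i+1}$ for every $i \in \{1,\ldots,n-1\}$, or $k_{n-1} - k_n < k_j - k_{j+1}$ for every $j \in \{0,\ldots,n-2\}$. *)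

theory Defs
  imports Main "HOL-Library.Poly_Mapping"
begin

text \<open>Laurent polynomials in x with nonnegative integer coefficients:
  finitely supported maps from exponents (int) to coefficients (nat).\<close>
type_synonym laurent_N0 = "int \<Rightarrow>\<^sub>0 nat"

definition supp :: "laurent_N0 \<Rightarrow> int set" where
  "supp f = Poly_Mapping.keys f"

definition eval1 :: "laurent_N0 \<Rightarrow> nat" where
  "eval1 f = (\<Sum>k\<in>Poly_Mapping.keys f. Poly_Mapping.lookup f k)"

definition exps :: "laurent_N0 \<Rightarrow> int list" where
  "exps f = rev (sorted_list_of_set (Poly_Mapping.keys f))"

definition hyper_monolithic :: "laurent_N0 \<Rightarrow> bool" where
  "hyper_monolithic f \<longleftrightarrow> card (supp f) > 1 \<and>
     (let ks = exps f; n = length ks - 1 in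
       (\<forall>i. 1 \<le> i \<and> i \<le> n - 1 \<longrightarrow> ks!0 - ks!1 < ks!i - ks!(i+1)) \<or>
       (\<forall>j. j + 2 \<le> n \<longrightarrow> ks!(n-1) - ks!n < ks!j - ks!(j+1)))"

end

theory Submission
  imports Defs
begin

lemma exps_props:
  assumes "Poly_Mapping.keys g = T"
  shows "set (exps g) = T" "length (exps g) = card T"
    "\<And>i j. i < j \<Longrightarrow> j < length (exps g) \<Longrightarrow> exps g ! j < exps g ! i"
proof -
  have fin: "finite T" using assms finite_keys by blast
  show "set (exps g) = T" using assms fin by (simp add: exps_def)
  show "length (exps g) = card T" using assms fin by (simp add: exps_def)
  have "sorted_wrt (<) (sorted_list_of_set T)" using strict_sorted_list_of_set by blast
  hence "sorted_wrt (>) (exps g)" using assms by (simp add: exps_def sorted_wrt_rev)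
  thus "\<And>i j. i < j \<Longrightarrow> j < length (exps g) \<Longrightarrow> exps g ! j < exps g ! i"
    using sorted_wrt_nth_less by fastforce
qed

lemma hm_low:
  fixes T :: "int set" and g :: laurent_N0
  assumes kg: "Poly_Mapping.keys g = T" and mT: "m \<in> T" and mdT: "m + d \<in> T" and dpos: "d > 0"
    and low: "\<forall>x\<in>T. m \<le> x"
    and pr: "\<forall>x\<in>T. \<forall>y\<in>T. x < y \<longrightarrow> (x = m \<and> y = m + d) \<or> d < y - x"
  shows "hyper_monolithic g"
proof -
  define ks where "ks = exps g"
  have setks: "set ks = T" and lenks: "length ks = card T"
    and mono: "\<And>i j. i < j \<Longrightarrow> j < length ks \<Longrightarrow> ks ! j < ks ! i"
    using exps_props[OF kg] by (auto simp: ks_def)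
  have fin: "finite T" using kg finite_keys by blast
  have "card {m, m+d} \<le> card T" using mT mdT fin by (intro card_mono) auto
  hence c2: "card T \<ge> 2" using dpos by simp
  define n where "n = length ks - 1"
  have nlen: "n < length ks" "length ks = n + 1" "n \<ge> 1" using c2 lenks by (auto simp: n_def)
  have inT: "\<And>i. i < length ks \<Longrightarrow> ks ! i \<in> T" using setks nth_mem by blast
  obtain k where k: "k < length ks" "ks ! k = m" using mT setks by (metis in_set_conv_nth)
  have kn: "k = n"
  proof (rule ccontr)
    assume "k \<noteq> n" hence "k < n" using k nlen by auto
    hence "ks ! n < m" using mono[of k n] k nlen by auto
    thus False using low inT[of n] nlen by force
  qed
  obtain k' where k': "k' < length ks" "ks ! k' = m + d" using mdT setks by (metis in_set_conv_nth)
  have "k' \<noteq> n" using k' k kn dpos by auto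
  hence k'n: "k' < n" using k' nlen by auto
  have k'n1: "k' = n - 1"
  proof (rule ccontr)
    assume "k' \<noteq> n - 1" hence lt: "k' < n - 1" using k'n by auto
    have a1: "ks ! (n-1) < m + d" using mono[of k' "n-1"] lt k' nlen by auto
    have a2: "m < ks ! (n-1)" using mono[of "n-1" n] k kn nlen by auto
    have "(m = m \<and> ks!(n-1) = m + d) \<or> d < ks!(n-1) - m"
      using pr mT inT[of "n-1"] nlen a2 by (meson diff_less less_imp_diff_less zero_less_one)
    thus False using a1 by auto
  qed
  have "\<forall>j. j + 2 \<le> n \<longrightarrow> ks!(n-1) - ks!n < ks!j - ks!(j+1)"
  proof (intro allI impI)
    fix j assume j: "j + 2 \<le> n"
    have lt: "ks!(j+1) < ks!j" using mono[of j "j+1"] j nlen by auto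
    have gt: "ks!(n-1) < ks!j" using mono[of j "n-1"] j nlen by auto
    have "(ks!(j+1) = m \<and> ks!j = m + d) \<or> d < ks!j - ks!(j+1)"
      using pr inT[of j] inT[of "j+1"] j nlen lt by auto
    thus "ks!(n-1) - ks!n < ks!j - ks!(j+1)" using gt k' k'n1 k kn by auto
  qed
  thus ?thesis unfolding hyper_monolithic_def supp_def Let_def
    using c2 kg ks_def n_def by auto
qed

lemma hm_high:
  fixes T :: "int set" and g :: laurent_N0
  assumes kg: "Poly_Mapping.keys g = T" and mT: "M \<in> T" and mdT: "M - d \<in> T" and dpos: "d > 0"
    and high: "\<forall>x\<in>T. x \<le> M"
    and pr: "\<forall>x\<in>T. \<forall>y\<in>T. x < y \<longrightarrow> (x = M - d \<and> y = M) \<or> d < y - x"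
  shows "hyper_monolithic g"
proof -
  define ks where "ks = exps g"
  have setks: "set ks = T" and lenks: "length ks = card T"
    and mono: "\<And>i j. i < j \<Longrightarrow> j < length ks \<Longrightarrow> ks ! j < ks ! i"
    using exps_props[OF kg] by (auto simp: ks_def)
  have fin: "finite T" using kg finite_keys by blast
  have "card {M, M-d} \<le> card T" using mT mdT fin by (intro card_mono) auto
  hence c2: "card T \<ge> 2" using dpos by simp
  define n where "n = length ks - 1"
  have nlen: "n < length ks" "length ks = n + 1" "n \<ge> 1" using c2 lenks by (auto simp: n_def)
  have inT: "\<And>i. i < length ks \<Longrightarrow> ks ! i \<in> T" using setks nth_mem by blast
  obtain k where k: "k < length ks" "ks ! k = M" using mT setks by (metis in_set_conv_nth)
  have kn: "k = 0"
  proof (rule ccontr)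
    assume "k \<noteq> 0" hence "0 < k" by auto
    hence "M < ks ! 0" using mono[of 0 k] k by auto
    thus False using high inT[of 0] nlen by force
  qed
  obtain k' where k': "k' < length ks" "ks ! k' = M - d" using mdT setks by (metis in_set_conv_nth)
  have "k' \<noteq> 0"
  proof
    assume "k' = 0" hence "M - d = M" using k' k kn by simp
    thus False using dpos by simp
  qed
  have k'n1: "k' = 1"
  proof (rule ccontr)
    assume "k' \<noteq> 1" hence lt: "1 < k'" using \<open>k' \<noteq> 0\<close> by auto
    have a1: "M - d < ks ! 1" using mono[of 1 k'] lt k' by auto
    have a2: "ks ! 1 < M" using mono[of 0 1] k kn nlen by auto
    have "(ks!1 = M - d \<and> M = M) \<or> d < M - ks!1"
      using pr mT inT[of 1] nlen a2 by auto
    thus False using a1 by auto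
  qed
  have "\<forall>i. 1 \<le> i \<and> i \<le> n - 1 \<longrightarrow> ks!0 - ks!1 < ks!i - ks!(i+1)"
  proof (intro allI impI)
    fix j assume j: "1 \<le> j \<and> j \<le> n - 1"
    have lt: "ks!(j+1) < ks!j" using mono[of j "j+1"] j nlen by auto
    have gt: "ks!j < ks!0" using mono[of 0 j] j nlen by auto
    have "(ks!(j+1) = M - d \<and> ks!j = M) \<or> d < ks!j - ks!(j+1)"
    proof -
      have "j < length ks" "j+1 < length ks" using j nlen by auto
      thus ?thesis using pr inT[of j] inT[of "j+1"] lt by blast
    qed
    thus "ks!0 - ks!1 < ks!j - ks!(j+1)" using gt k' k'n1 k kn by auto
  qed
  thus ?thesis unfolding hyper_monolithic_def supp_def Let_def
    using c2 kg ks_def n_def by auto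
qed

definition good_low :: "int set \<Rightarrow> int \<Rightarrow> int \<Rightarrow> bool" where
  "good_low T m d \<longleftrightarrow> m \<in> T \<and> m + d \<in> T \<and> d > 0 \<and> (\<forall>x\<in>T. m \<le> x) \<and>
     (\<forall>x\<in>T. \<forall>y\<in>T. x < y \<longrightarrow> (x = m \<and> y = m + d) \<or> d < y - x)"

definition good_high :: "int set \<Rightarrow> int \<Rightarrow> int \<Rightarrow> bool" where
  "good_high T M d \<longleftrightarrow> M \<in> T \<and> M - d \<in> T \<and> d > 0 \<and> (\<forall>x\<in>T. x \<le> M) \<and>
     (\<forall>x\<in>T. \<forall>y\<in>T. x < y \<longrightarrow> (x = M - d \<and> y = M) \<or> d < y - x)"

lemma realize:
  fixes f :: laurent_N0
  assumes sub: "T \<subseteq> Poly_Mapping.keys f"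
    and hm: "\<And>g :: laurent_N0. Poly_Mapping.keys g = T \<Longrightarrow> hyper_monolithic g"
    and big: "(\<Sum>x\<in>Poly_Mapping.keys f. Poly_Mapping.lookup f x) \<le> 2 * (\<Sum>x\<in>T. Poly_Mapping.lookup f x)"
  shows "\<exists>g h :: laurent_N0. f = g + h \<and> hyper_monolithic g \<and> eval1 h \<le> eval1 g"
proof -
  define S where "S = Poly_Mapping.keys f"
  have finS: "finite S" by (simp add: S_def)
  define g :: laurent_N0 where "g = Abs_poly_mapping (\<lambda>x. if x \<in> T then Poly_Mapping.lookup f x else 0)"
  define h :: laurent_N0 where "h = Abs_poly_mapping (\<lambda>x. if x \<in> T then 0 else Poly_Mapping.lookup f x)"
  have f1: "finite {x. (if x \<in> T then Poly_Mapping.lookup f x else 0) \<noteq> 0}"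
    by (rule finite_subset[of _ S]) (auto simp: S_def in_keys_iff)
  have f2: "finite {x. (if x \<in> T then 0 else Poly_Mapping.lookup f x) \<noteq> 0}"
    by (rule finite_subset[of _ S]) (auto simp: S_def in_keys_iff)
  have lg: "Poly_Mapping.lookup g = (\<lambda>x. if x \<in> T then Poly_Mapping.lookup f x else 0)" using f1 by (simp add: g_def)
  have lh: "Poly_Mapping.lookup h = (\<lambda>x. if x \<in> T then 0 else Poly_Mapping.lookup f x)" using f2 by (simp add: h_def)
  have kg: "Poly_Mapping.keys g = T" using sub by (auto simp: in_keys_iff lg split: if_splits)
  have kh: "Poly_Mapping.keys h = S - T" by (auto simp: in_keys_iff lh S_def split: if_splits)
  have fgh: "f = g + h" by (rule poly_mapping_eqI) (simp add: lookup_add lg lh)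
  have e1: "eval1 g = (\<Sum>x\<in>T. Poly_Mapping.lookup f x)" unfolding eval1_def kg
    by (rule sum.cong) (auto simp: lg)
  have e2: "eval1 h = (\<Sum>x\<in>S - T. Poly_Mapping.lookup f x)" unfolding eval1_def kh
    by (rule sum.cong) (auto simp: lh)
  have "(\<Sum>x\<in>S. Poly_Mapping.lookup f x) = (\<Sum>x\<in>T. Poly_Mapping.lookup f x) + (\<Sum>x\<in>S - T. Poly_Mapping.lookup f x)"
    using sum.subset_diff[OF sub[folded S_def] finS] by (simp add: add.commute)
  hence "eval1 h \<le> eval1 g" using big e1 e2 by (simp add: S_def)
  thus ?thesis using fgh hm[OF kg] by blast
qed

lemma comb:
  fixes S :: "int set" and w :: "int \<Rightarrow> nat"
  assumes finS: "finite S" and c2: "card S \<ge> 2"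
  shows "\<exists>T \<subseteq> S. ((\<exists>m d. good_low T m d) \<or> (\<exists>M d. good_high T M d)) \<and>
           (\<Sum>x\<in>S. w x) \<le> 2 * (\<Sum>x\<in>T. w x)"
proof -
  define D where "D = {y - x | x y. x \<in> S \<and> y \<in> S \<and> x < y}"
  have finD: "finite D"
  proof -
    have "D \<subseteq> (\<lambda>(x,y). y - x) ` (S \<times> S)" unfolding D_def by auto
    thus ?thesis using finS by (meson finite_SigmaI finite_imageI finite_subset)
  qed
  obtain x1 y1 where xy1: "x1 \<in> S" "y1 \<in> S" "x1 \<noteq> y1"
  proof -
    obtain x1 where "x1 \<in> S" using c2 by fastforce
    moreover have "S - {x1} \<noteq> {}"
    proof
      assume "S - {x1} = {}" hence "S \<subseteq> {x1}" by auto
      hence "card S \<le> 1" using card_mono[of "{x1}" S] by simp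
      thus False using c2 by simp
    qed
    ultimately show ?thesis using that by blast
  qed
  have Dne: "D \<noteq> {}"
  proof (cases "x1 < y1")
    case True thus ?thesis using xy1 unfolding D_def by blast
  next
    case False hence "y1 < x1" using xy1 by auto
    thus ?thesis using xy1 unfolding D_def by blast
  qed
  define d where "d = Min D"
  have "d \<in> D" using finD Dne d_def Min_in by blast
  then obtain x0 where x0: "x0 \<in> S" "x0 + d \<in> S" and dpos: "d > 0"
    unfolding D_def by force
  have gap: "\<And>x y. x \<in> S \<Longrightarrow> y \<in> S \<Longrightarrow> x < y \<Longrightarrow> d \<le> y - x"
    unfolding d_def using finD by (intro Min_le) (auto simp: D_def)
  have betw: "\<And>x y. x \<in> S \<Longrightarrow> y \<in> S \<Longrightarrow> x < y \<Longrightarrow> y < x + d \<Longrightarrow> False"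
    using gap by fastforce
  define E where "E = {x \<in> S. x + d \<in> S}"
  have finE: "finite E" using finS by (simp add: E_def)
  have Ene: "E \<noteq> {}" using x0 by (auto simp: E_def)
  define a where "a = Min E"
  define b where "b = Max E"
  have aE: "a \<in> E" using finE Ene a_def Min_in by blast
  have bE: "b \<in> E" using finE Ene b_def Max_in by blast
  have amin: "\<And>x. x \<in> E \<Longrightarrow> a \<le> x" using finE a_def by simp
  have bmax: "\<And>x. x \<in> E \<Longrightarrow> x \<le> b" using finE b_def by simp
  have aS: "a \<in> S" "a + d \<in> S" using aE by (auto simp: E_def)
  have bS: "b \<in> S" "b + d \<in> S" using bE by (auto simp: E_def)
  have ab: "a \<le> b" using amin bE by blast
  define \<sigma> where "\<sigma> x = card {y \<in> E. y < x}" for x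
  have \<sigma>_step: "\<sigma> (x + d) = Suc (\<sigma> x)" if xE: "x \<in> E" for x
  proof -
    have "{y \<in> E. y < x + d} = insert x {y \<in> E. y < x}"
    proof
      show "{y \<in> E. y < x + d} \<subseteq> insert x {y \<in> E. y < x}"
      proof
        fix y assume y: "y \<in> {y \<in> E. y < x + d}"
        show "y \<in> insert x {y \<in> E. y < x}"
        proof (cases "y < x")
          case True thus ?thesis using y by auto
        next
          case False
          have "y \<in> S" "x \<in> S" using y xE by (auto simp: E_def)
          hence "y = x" using betw[of x y] False y by force
          thus ?thesis by simp
        qed
      qed
      show "insert x {y \<in> E. y < x} \<subseteq> {y \<in> E. y < x + d}" using xE dpos by auto
    qed
    moreover have "finite {y \<in> E. y < x}" using finE by simp
    ultimately show ?thesis unfolding \<sigma>_def by simp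
  qed
  have \<sigma>a: "\<sigma> a = 0" unfolding \<sigma>_def using amin finE by (force simp: card_eq_0_iff)
  define iso where "iso x \<longleftrightarrow> x - d \<notin> S \<and> x + d \<notin> S" for x
  define X where "X p = {x \<in> S. iso x \<or> even (\<sigma> x) = p}" for p
  have XS: "X p \<subseteq> S" for p by (auto simp: X_def)
  have noadj: "False" if "x \<in> X p" "x + d \<in> X p" for x p
  proof -
    have xE: "x \<in> E" using that by (auto simp: X_def E_def)
    have "\<not> iso x" "\<not> iso (x + d)" using that by (auto simp: X_def iso_def)
    hence "even (\<sigma> x) = p" "even (\<sigma> (x + d)) = p" using that by (auto simp: X_def)
    thus False using \<sigma>_step[OF xE] by simp
  qed
  have pairc: "\<forall>x\<in>T. \<forall>y\<in>T. x < y \<longrightarrow> (x = m \<and> y = m + d) \<or> d < y - x"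
    if "T \<subseteq> S" "\<forall>x\<in>T. x + d \<in> T \<longrightarrow> x = m" for T m
  proof (intro ballI impI)
    fix x y assume "x \<in> T" "y \<in> T" "x < y"
    moreover have "d \<le> y - x" using gap that \<open>x \<in> T\<close> \<open>y \<in> T\<close> \<open>x < y\<close> by blast
    ultimately show "(x = m \<and> y = m + d) \<or> d < y - x" using that
      by (cases "y = x + d") auto
  qed
  have pairc2: "\<forall>x\<in>T. \<forall>y\<in>T. x < y \<longrightarrow> (x = M - d \<and> y = M) \<or> d < y - x"
    if "T \<subseteq> S" "\<forall>x\<in>T. x + d \<in> T \<longrightarrow> x + d = M" for T M
  proof (intro ballI impI)
    fix x y assume "x \<in> T" "y \<in> T" "x < y"
    moreover have "d \<le> y - x" using gap that \<open>x \<in> T\<close> \<open>y \<in> T\<close> \<open>x < y\<close> by blast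
    ultimately show "(x = M - d \<and> y = M) \<or> d < y - x" using that
      by (cases "y = x + d") auto
  qed

  have \<sigma>ad: "\<sigma> (a + d) = 1" using \<sigma>_step[OF aE] \<sigma>a by simp
  have adX: "a + d \<in> X False" using aS \<sigma>ad by (simp add: X_def)
  define q where "q = even (\<sigma> b)"
  have bX: "b \<in> X q" using bS by (simp add: X_def q_def)
  define A1 where "A1 = insert a {x \<in> X False. a < x}"
  define A0 where "A0 = (if a + d + d \<in> S then insert (a + d) {x \<in> X True. a + d < x}
                         else insert a (insert (a + d) {x \<in> X True. a + d < x}))"
  define B1 where "B1 = insert (b + d) {x \<in> X q. x < b + d}"
  define B0 where "B0 = (if b - d \<in> S then insert b {x \<in> X (\<not> q). x < b}
                         else insert b (insert (b + d) {x \<in> X (\<not> q). x < b}))"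
  have A1S: "A1 \<subseteq> S" using aS XS by (auto simp: A1_def)
  have A0S: "A0 \<subseteq> S" using aS XS by (auto simp: A0_def)
  have B1S: "B1 \<subseteq> S" using bS XS by (auto simp: B1_def)
  have B0S: "B0 \<subseteq> S" using bS XS by (auto simp: B0_def)
  have gA1: "good_low A1 a d"
  proof -
    have na: "\<forall>x\<in>A1. x + d \<in> A1 \<longrightarrow> x = a"
    proof (intro ballI impI)
      fix x assume x: "x \<in> A1" "x + d \<in> A1"
      show "x = a"
      proof (rule ccontr)
        assume "x \<noteq> a"
        hence "x \<in> X False" "a < x" using x by (auto simp: A1_def)
        hence "x + d \<in> X False" using x dpos by (auto simp: A1_def)
        thus False using noadj \<open>x \<in> X False\<close> by blast
      qed
    qed
    show ?thesis unfolding good_low_def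
      using pairc[OF A1S na] dpos adX by (auto simp: A1_def)
  qed
  have gA0: "\<exists>m. good_low A0 m d"
  proof (cases "a + d + d \<in> S")
    case True
    have \<sigma>2: "\<sigma> (a + d + d) = 2" using \<sigma>_step[of "a + d"] \<sigma>ad True aS by (simp add: E_def)
    have X2: "a + d + d \<in> X True" using True \<sigma>2 by (simp add: X_def)
    have A0e: "A0 = insert (a + d) {x \<in> X True. a + d < x}" using True by (simp add: A0_def)
    have na: "\<forall>x\<in>A0. x + d \<in> A0 \<longrightarrow> x = a + d"
    proof (intro ballI impI)
      fix x assume x: "x \<in> A0" "x + d \<in> A0"
      show "x = a + d"
      proof (rule ccontr)
        assume "x \<noteq> a + d"
        hence "x \<in> X True" "a + d < x" using x by (auto simp: A0e)
        hence "x + d \<in> X True" using x dpos by (auto simp: A0e)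
        thus False using noadj \<open>x \<in> X True\<close> by blast
      qed
    qed
    have "good_low A0 (a + d) d" unfolding good_low_def
      using pairc[OF A0S na] dpos X2 by (auto simp: A0e)
    thus ?thesis by blast
  next
    case False
    have A0e: "A0 = insert a (insert (a + d) {x \<in> X True. a + d < x})" using False by (simp add: A0_def)
    have na: "\<forall>x\<in>A0. x + d \<in> A0 \<longrightarrow> x = a"
    proof (intro ballI impI)
      fix x assume x: "x \<in> A0" "x + d \<in> A0"
      show "x = a"
      proof (rule ccontr)
        assume "x \<noteq> a"
        moreover have "x \<noteq> a + d" using x False A0S by auto
        ultimately have "x \<in> X True" "a + d < x" using x by (auto simp: A0e)
        hence "x + d \<in> X True" using x dpos by (auto simp: A0e)
        thus False using noadj \<open>x \<in> X True\<close> by blast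
      qed
    qed
    have "good_low A0 a d" unfolding good_low_def
      using pairc[OF A0S na] dpos by (auto simp: A0e)
    thus ?thesis by blast
  qed
  have gB1: "good_high B1 (b + d) d"
  proof -
    have na: "\<forall>x\<in>B1. x + d \<in> B1 \<longrightarrow> x + d = b + d"
    proof (intro ballI impI)
      fix x assume x: "x \<in> B1" "x + d \<in> B1"
      show "x + d = b + d"
      proof (rule ccontr)
        assume ne: "x + d \<noteq> b + d"
        hence "x + d \<in> X q" "x + d < b + d" using x by (auto simp: B1_def)
        hence "x \<in> X q" using x dpos by (auto simp: B1_def)
        thus False using noadj \<open>x + d \<in> X q\<close> by blast
      qed
    qed
    show ?thesis unfolding good_high_def
      using pairc2[OF B1S na] dpos bX by (auto simp: B1_def)
  qed
  have gB0: "\<exists>M. good_high B0 M d"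
  proof (cases "b - d \<in> S")
    case True
    have bdE: "b - d \<in> E" using True bS by (simp add: E_def)
    have "\<sigma> b = Suc (\<sigma> (b - d))" using \<sigma>_step[OF bdE] by simp
    hence X2: "b - d \<in> X (\<not> q)" using True by (simp add: X_def q_def)
    have B0e: "B0 = insert b {x \<in> X (\<not> q). x < b}" using True by (simp add: B0_def)
    have na: "\<forall>x\<in>B0. x + d \<in> B0 \<longrightarrow> x + d = b"
    proof (intro ballI impI)
      fix x assume x: "x \<in> B0" "x + d \<in> B0"
      show "x + d = b"
      proof (rule ccontr)
        assume ne: "x + d \<noteq> b"
        hence "x + d \<in> X (\<not> q)" "x + d < b" using x by (auto simp: B0e)
        hence "x \<in> X (\<not> q)" using x dpos by (auto simp: B0e)
        thus False using noadj \<open>x + d \<in> X (\<not> q)\<close> by blast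
      qed
    qed
    have "good_high B0 b d" unfolding good_high_def
      using pairc2[OF B0S na] dpos X2 by (auto simp: B0e)
    thus ?thesis by blast
  next
    case False
    have B0e: "B0 = insert b (insert (b + d) {x \<in> X (\<not> q). x < b})" using False by (simp add: B0_def)
    have na: "\<forall>x\<in>B0. x + d \<in> B0 \<longrightarrow> x + d = b + d"
    proof (intro ballI impI)
      fix x assume x: "x \<in> B0" "x + d \<in> B0"
      show "x + d = b + d"
      proof (rule ccontr)
        assume ne: "x + d \<noteq> b + d"
        moreover have "x + d \<noteq> b"
        proof
          assume "x + d = b" hence "x = b - d" by simp
          thus False using x False B0S by auto
        qed
        ultimately have "x + d \<in> X (\<not> q)" "x + d < b" using x by (auto simp: B0e)
        hence "x \<in> X (\<not> q)" using x dpos by (auto simp: B0e)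
        thus False using noadj \<open>x + d \<in> X (\<not> q)\<close> by blast
      qed
    qed
    have "good_high B0 (b + d) d" unfolding good_high_def
      using pairc2[OF B0S na] dpos by (auto simp: B0e)
    thus ?thesis by blast
  qed
  have B0sup: "{x \<in> X (\<not> q). x < b} \<subseteq> B0" by (auto simp: B0_def)
  have A0sup: "{x \<in> X True. a + d < x} \<subseteq> A0" by (auto simp: A0_def)
  have cov: "((x \<in> A1 \<or> x \<in> A0) \<and> (x \<in> B1 \<or> x \<in> B0)) \<or> (x \<in> A1 \<and> x \<in> A0) \<or> (x \<in> B1 \<and> x \<in> B0)"
    if xS: "x \<in> S" for x
  proof (cases "iso x")
    case True
    have "x \<noteq> a" using True aS by (auto simp: iso_def)
    have "x \<noteq> a + d" using True aS by (auto simp: iso_def)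
    show ?thesis
    proof (cases "x < a")
      case True
      hence "x < b" using ab by simp
      hence "x \<in> B1" "x \<in> B0" using \<open>iso x\<close> xS B0sup dpos by (auto simp: B1_def X_def)
      thus ?thesis by blast
    next
      case False
      hence "a < x" using \<open>x \<noteq> a\<close> by simp
      hence "a + d < x" using betw[OF aS(1) xS] \<open>x \<noteq> a + d\<close> by force
      hence "x \<in> A1" "x \<in> A0" using \<open>iso x\<close> xS A0sup dpos by (auto simp: A1_def X_def)
      thus ?thesis by blast
    qed
  next
    case False
    have rng: "a \<le> x \<and> x \<le> b + d"
    proof (cases "x + d \<in> S")
      case True hence "x \<in> E" using xS by (simp add: E_def)
      thus ?thesis using amin bmax dpos by force
    next
      case False2: False
      hence "x - d \<in> S" using False by (auto simp: iso_def)
      hence "x - d \<in> E" using xS by (simp add: E_def)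
      thus ?thesis using amin bmax dpos by force
    qed
    have XA: "x \<in> X (even (\<sigma> x))" using xS by (simp add: X_def)
    have Apart: "x \<in> A1 \<or> x \<in> A0"
    proof -
      consider "x = a" | "x = a + d" | "a + d < x"
        using rng betw[OF aS(1) xS] by force
      thus ?thesis
      proof cases
        case 1 thus ?thesis by (simp add: A1_def)
      next
        case 2 thus ?thesis using adX dpos by (simp add: A1_def)
      next
        case 3
        show ?thesis
        proof (cases "even (\<sigma> x)")
          case True thus ?thesis using XA 3 A0sup by auto
        next
          case False thus ?thesis using XA 3 dpos by (auto simp: A1_def)
        qed
      qed
    qed
    have Bpart: "x \<in> B1 \<or> x \<in> B0"
    proof -
      consider "x = b + d" | "x = b" | "x < b"
        using rng betw[OF bS(1) xS] by force
      thus ?thesis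
      proof cases
        case 1 thus ?thesis by (simp add: B1_def)
      next
        case 2 thus ?thesis using bX dpos by (simp add: B1_def)
      next
        case 3
        show ?thesis
        proof (cases "even (\<sigma> x) = q")
          case True thus ?thesis using XA 3 dpos by (auto simp: B1_def)
        next
          case False hence "even (\<sigma> x) = (\<not> q)" by auto
          thus ?thesis using XA 3 B0sup by auto
        qed
      qed
    qed
    show ?thesis using Apart Bpart by blast
  qed
  define ind where "ind T x = (if x \<in> T then w x else 0)" for T x
  have sT: "(\<Sum>x\<in>T. w x) = (\<Sum>x\<in>S. ind T x)" if "T \<subseteq> S" for T
  proof -
    have "(\<Sum>x\<in>S. ind T x) = (\<Sum>x\<in>S \<inter> T. w x)"
      unfolding ind_def using finS by (simp add: sum.inter_restrict)
    also have "S \<inter> T = T" using that by auto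
    finally show ?thesis by simp
  qed
  have "(\<Sum>x\<in>S. 2 * w x) \<le> (\<Sum>x\<in>S. ind A1 x + ind A0 x + ind B1 x + ind B0 x)"
  proof (rule sum_mono)
    fix x assume "x \<in> S"
    from cov[OF this] show "2 * w x \<le> ind A1 x + ind A0 x + ind B1 x + ind B0 x"
      unfolding ind_def by auto
  qed
  also have "\<dots> = (\<Sum>x\<in>A1. w x) + (\<Sum>x\<in>A0. w x) + (\<Sum>x\<in>B1. w x) + (\<Sum>x\<in>B0. w x)"
    using sT[OF A1S] sT[OF A0S] sT[OF B1S] sT[OF B0S] by (simp add: sum.distrib)
  finally have tot: "2 * (\<Sum>x\<in>S. w x) \<le> (\<Sum>x\<in>A1. w x) + (\<Sum>x\<in>A0. w x) + (\<Sum>x\<in>B1. w x) + (\<Sum>x\<in>B0. w x)"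
    by (simp add: sum_distrib_left)
  show ?thesis
  proof (rule ccontr)
    assume nt: "\<not> ?thesis"
    have "\<not> (\<Sum>x\<in>S. w x) \<le> 2 * (\<Sum>x\<in>A1. w x)" using nt A1S gA1 by blast
    moreover have "\<not> (\<Sum>x\<in>S. w x) \<le> 2 * (\<Sum>x\<in>A0. w x)" using nt A0S gA0 by blast
    moreover have "\<not> (\<Sum>x\<in>S. w x) \<le> 2 * (\<Sum>x\<in>B1. w x)" using nt B1S gB1 by blast
    moreover have "\<not> (\<Sum>x\<in>S. w x) \<le> 2 * (\<Sum>x\<in>B0. w x)" using nt B0S gB0 by blast
    ultimately show False using tot by linarith
  qed
qed
theorem lemma2p9:
  fixes f :: laurent_N0
  assumes "card (supp f) \<ge> 3"
  shows "\<exists>g h :: laurent_N0. f = g + h \<and> hyper_monolithic g \<and> eval1 h \<le> eval1 g"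
proof -
  have c2: "card (Poly_Mapping.keys f) \<ge> 2" using assms by (simp add: supp_def)
  obtain T where T: "T \<subseteq> Poly_Mapping.keys f"
    "(\<exists>m d. good_low T m d) \<or> (\<exists>M d. good_high T M d)"
    "(\<Sum>x\<in>Poly_Mapping.keys f. Poly_Mapping.lookup f x) \<le> 2 * (\<Sum>x\<in>T. Poly_Mapping.lookup f x)"
    using comb[OF finite_keys c2, of "Poly_Mapping.lookup f"] by blast
  have hm: "hyper_monolithic g" if kg: "Poly_Mapping.keys g = T" for g :: laurent_N0
    using T(2)
  proof
    assume "\<exists>m d. good_low T m d"
    then obtain m d where "good_low T m d" by blast
    thus ?thesis using hm_low[OF kg] unfolding good_low_def by blast
  next
    assume "\<exists>M d. good_high T M d"
    then obtain M d where "good_high T M d" by blast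
    thus ?thesis using hm_high[OF kg] unfolding good_high_def by blast
  qed
  show ?thesis using realize[OF T(1) hm T(3)] by blast
qed

end
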